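(* Let $G$ be a finitely generated group containing a finite index subgroup isomorphic to $\mathbb{Z}$. Then for every finite generating set $S$ of $G$, the metric space $(G,d_S)$ admits a bilipschitz embedding into $\mathbb{R}$.
   Context: $d_S$ is the word metric, i.e. the shortest path distance on the vertex set $G$ of the Cayley graph $\mathrm{Cay}(G,S)$ (the Cayley graph is regarded as the set of group elements, not as a 1-dimensional complex). A bilipschitz embedding is a map $f$ with $c\,d(u,v)\le |f(u)-f(v)|\le C\,d(u,v)$ for constants $0<c\le C<\infty$. *)

theory Defs
  imports Complex_Main "HOL-Algebra.Algebra"
begin

definition word_dist :: "('a, 'b) monoid_scheme \<Rightarrow> 'a set \<Rightarrow> 'a \<Rightarrow> 'a \<Rightarrow> nat" where
  "word_dist G S g h = (LEAST n. \<exists>ws. length ws = n \<and> set ws \<subseteq> S \<union> m_inv G ` S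
       \<and> foldr (\<lambda>x y. x \<otimes>\<^bsub>G\<^esub> y) ws \<one>\<^bsub>G\<^esub> = inv\<^bsub>G\<^esub> g \<otimes>\<^bsub>G\<^esub> h)"

definition finitely_generated :: "('a, 'b) monoid_scheme \<Rightarrow> bool" where
  "finitely_generated G \<longleftrightarrow> (\<exists>S. finite S \<and> S \<subseteq> carrier G \<and> generate G S = carrier G)"

definition bilipschitz_embeddable_real :: "'a set \<Rightarrow> ('a \<Rightarrow> 'a \<Rightarrow> real) \<Rightarrow> bool" where
  "bilipschitz_embeddable_real A d \<longleftrightarrow> (\<exists>(f :: 'a \<Rightarrow> real) lo hi. 0 < lo \<and> lo \<le> hi \<and>
      (\<forall>u\<in>A. \<forall>v\<in>A. lo * d u v \<le> abs (f u - f v) \<and> abs (f u - f v) \<le> hi * d u v))"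

end

theory Submission imports Defs begin
locale vz = group G for G (structure) +
  fixes H :: "'a set" and \<psi> :: "'a \<Rightarrow> int" and S :: "'a set"
  assumes subH: "subgroup H G" and finR: "finite (rcosets H)"
    and psi_iso: "\<psi> \<in> iso (G\<lparr>carrier := H\<rparr>) integer_group"
    and finS: "finite S" and SG: "S \<subseteq> carrier G" and genS: "generate G S = carrier G"
begin
definition "S' = S \<union> m_inv G ` S"
definition "wprod ws = foldr (\<lambda>x y. x \<otimes> y) ws \<one>"
definition "len x = (LEAST n. \<exists>ws. length ws = n \<and> set ws \<subseteq> S' \<and> wprod ws = x)"

lemma S'G: "S' \<subseteq> carrier G" using SG by (auto simp: S'_def)
lemma finS': "finite S'" using finS by (simp add: S'_def)

lemma wprod_closed: "set ws \<subseteq> S' \<Longrightarrow> wprod ws \<in> carrier G"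
  using S'G by (induction ws) (auto simp: wprod_def)
lemma wprod_append: "set xs \<subseteq> S' \<Longrightarrow> set ys \<subseteq> S' \<Longrightarrow> wprod (xs @ ys) = wprod xs \<otimes> wprod ys"
proof (induction xs)
  case Nil then show ?case using wprod_closed by (simp add: wprod_def)
next
  case (Cons a xs)
  then have "a \<in> carrier G" using S'G by auto
  with Cons show ?case using wprod_closed[of xs] wprod_closed[of ys]
    by (simp add: wprod_def m_assoc)
qed

lemma word_exists: "x \<in> carrier G \<Longrightarrow> \<exists>ws. set ws \<subseteq> S' \<and> wprod ws = x"
proof -
  assume "x \<in> carrier G"
  then have "x \<in> generate G S" using genS by simp
  then show ?thesis
  proof (induction rule: generate.induct)
    case one then show ?case by (intro exI[of _ "[]"]) (simp add: wprod_def)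
  next
    case (incl h) then show ?case using SG by (intro exI[of _ "[h]"]) (auto simp: wprod_def S'_def)
  next
    case (inv h) then show ?case using SG by (intro exI[of _ "[inv h]"]) (auto simp: wprod_def S'_def)
  next
    case (eng h1 h2)
    then obtain w1 w2 where "set w1 \<subseteq> S'" "wprod w1 = h1" "set w2 \<subseteq> S'" "wprod w2 = h2" by blast
    then show ?case by (intro exI[of _ "w1 @ w2"]) (simp add: wprod_append)
  qed
qed

lemma len_witness: assumes "x \<in> carrier G"
  shows "\<exists>ws. length ws = len x \<and> set ws \<subseteq> S' \<and> wprod ws = x"
proof -
  obtain ws where "set ws \<subseteq> S' \<and> wprod ws = x" using word_exists assms by blast
  then have "\<exists>n ws. length ws = n \<and> set ws \<subseteq> S' \<and> wprod ws = x" by blast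
  then show ?thesis unfolding len_def by (rule LeastI_ex)
qed

lemma len_le: "set ws \<subseteq> S' \<Longrightarrow> wprod ws = x \<Longrightarrow> len x \<le> length ws"
  unfolding len_def by (rule Least_le) blast

lemma len_one: "len \<one> = 0"
  using len_le[of "[]" \<one>] by (simp add: wprod_def)

lemma len_mult: assumes "x \<in> carrier G" "y \<in> carrier G" shows "len (x \<otimes> y) \<le> len x + len y"
proof -
  obtain w1 w2 where "length w1 = len x" "set w1 \<subseteq> S'" "wprod w1 = x"
     "length w2 = len y" "set w2 \<subseteq> S'" "wprod w2 = y" using len_witness assms by metis
  then show ?thesis using len_le[of "w1 @ w2" "x \<otimes> y"] by (simp add: wprod_append)
qed

lemma psi_hom: "x \<in> H \<Longrightarrow> y \<in> H \<Longrightarrow> \<psi> (x \<otimes> y) = \<psi> x + \<psi> y"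
  using psi_iso by (auto simp: iso_def hom_def)
lemma psi_inj: "inj_on \<psi> H" using psi_iso by (auto simp: iso_def bij_betw_def)
lemma psi_surj: "\<exists>x\<in>H. \<psi> x = n"
proof -
  have "\<psi> ` H = UNIV" using psi_iso by (auto simp: iso_def bij_betw_def)
  then show ?thesis by (metis UNIV_I imageE)
qed
lemma psi_one: "\<psi> \<one> = 0"
  using psi_hom[of \<one> \<one>] subgroup.one_closed[OF subH] by simp
lemma psi_inv: "x \<in> H \<Longrightarrow> \<psi> (inv x) = - \<psi> x"
  using psi_hom[of x "inv x"] subgroup.m_inv_closed[OF subH] subgroup.mem_carrier[OF subH] psi_one
  by simp
lemma HG: "H \<subseteq> carrier G" using subH by (simp add: subgroup.subset)

lemma len_H: "x \<in> H \<Longrightarrow> len x \<le> (len t + len (inv t)) * nat \<bar>\<psi> x\<bar>" if t: "t \<in> H" "\<psi> t = 1" for x t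
proof -
  have tG: "t \<in> carrier G" using t HG by auto
  have "\<forall>x\<in>H. nat \<bar>\<psi> x\<bar> = n \<longrightarrow> len x \<le> (len t + len (inv t)) * n" for n
  proof (induction n)
    case 0
    show ?case
    proof (intro ballI impI)
      fix x assume x: "x \<in> H" "nat \<bar>\<psi> x\<bar> = 0"
      then have "\<psi> x = \<psi> \<one>" using psi_one by simp
      then have "x = \<one>" using inj_onD[OF psi_inj] x subgroup.one_closed[OF subH] by blast
      then show "len x \<le> (len t + len (inv t)) * 0" using len_one by simp
    qed
  next
    case (Suc n)
    show ?case
    proof (intro ballI impI)
      fix x assume x: "x \<in> H" "nat \<bar>\<psi> x\<bar> = Suc n"
      have xG: "x \<in> carrier G" using x HG by auto
      show "len x \<le> (len t + len (inv t)) * Suc n"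
      proof (cases "\<psi> x > 0")
        case True
        define y where "y = x \<otimes> inv t"
        have yH: "y \<in> H" using x t subH by (simp add: y_def subgroup.m_closed subgroup.m_inv_closed)
        have "\<psi> y = \<psi> x - 1" using psi_hom[of x "inv t"] psi_inv[of t] t x subH
          by (simp add: y_def subgroup.m_inv_closed)
        then have "nat \<bar>\<psi> y\<bar> = n" using True x by simp
        then have ly: "len y \<le> (len t + len (inv t)) * n" using Suc yH by blast
        have "x = y \<otimes> t" using xG tG by (simp add: y_def m_assoc)
        then have "len x \<le> len y + len t" using len_mult[of y t] yH HG tG by auto
        then show ?thesis using ly by simp
      next
        case False
        define y where "y = x \<otimes> t"
        have yH: "y \<in> H" using x t subH by (simp add: y_def subgroup.m_closed)
        have "\<psi> y = \<psi> x + 1" using psi_hom[of x t] t x by (simp add: y_def)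
        then have "nat \<bar>\<psi> y\<bar> = n" using False x by simp
        then have ly: "len y \<le> (len t + len (inv t)) * n" using Suc yH by blast
        have "x = y \<otimes> inv t" using xG tG by (simp add: y_def m_assoc)
        then have "len x \<le> len y + len (inv t)" using len_mult[of y "inv t"] yH HG tG by auto
        then show ?thesis using ly by simp
      qed
    qed
  qed
  then show "x \<in> H \<Longrightarrow> ?thesis" by blast
qed

definition "rep c = (SOME r. r \<in> c)"
definition "cof g = rep (H #> g)"
definition "hpart g = g \<otimes> inv (cof g)"

lemma cof_in: "g \<in> carrier G \<Longrightarrow> cof g \<in> H #> g"
  unfolding cof_def rep_def using rcos_self[OF _ subH] by (metis someI)
lemma cof_G: "g \<in> carrier G \<Longrightarrow> cof g \<in> carrier G"
  using cof_in r_coset_subset_G[OF HG] by blast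
lemma hpart_H: "g \<in> carrier G \<Longrightarrow> hpart g \<in> H"
proof -
  assume g: "g \<in> carrier G"
  have "cof g \<otimes> inv g \<in> H" using subgroup.rcos_module_imp[OF subH is_group g cof_in[OF g]] .
  then have "inv (cof g \<otimes> inv g) \<in> H" using subH by (simp add: subgroup.m_inv_closed)
  then show ?thesis using g cof_G[OF g] by (simp add: hpart_def inv_mult_group)
qed
lemma hpart_eq: "g \<in> carrier G \<Longrightarrow> g = hpart g \<otimes> cof g"
  using cof_G by (simp add: hpart_def m_assoc)
lemma rep_in_R: "c \<in> rcosets H \<Longrightarrow> rep c \<in> carrier G"
  using cof_G unfolding cof_def RCOSETS_def by auto

lemma cancel1: "x \<in> carrier G \<Longrightarrow> y \<in> carrier G \<Longrightarrow> inv x \<otimes> (x \<otimes> y) = y"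
  by (simp add: m_assoc[symmetric])
lemma cancel2: "x \<in> carrier G \<Longrightarrow> y \<in> carrier G \<Longrightarrow> x \<otimes> (inv x \<otimes> y) = y"
  by (simp add: m_assoc[symmetric])
end

locale vz2 = vz +
  fixes idx :: "'a set \<Rightarrow> nat" and k :: nat
  assumes idx_inj: "inj_on idx (rcosets H)" and idx_lt: "\<And>c. c \<in> rcosets H \<Longrightarrow> idx c < k"
begin
definition "K = int k + 1"
definition "f g = K * \<psi> (hpart g) + int (idx (H #> g))"
definition "D c s = \<psi> (rep c \<otimes> s \<otimes> inv (rep (c #> s)))"
definition "M = (\<Sum>p\<in>(rcosets H) \<times> S'. \<bar>D (fst p) (snd p)\<bar>)"

lemma step: assumes g: "g \<in> carrier G" and s: "s \<in> S'"
  shows "\<bar>f (g \<otimes> s) - f g\<bar> \<le> K * M + int k"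
proof -
  have sG: "s \<in> carrier G" using s S'G by auto
  define c where "c = H #> g"
  have cR: "c \<in> rcosets H" using rcosetsI[OF HG g] c_def by simp
  have cs: "H #> (g \<otimes> s) = c #> s" using coset_mult_assoc[OF HG g sG] c_def by simp
  have csR: "c #> s \<in> rcosets H" using rcosetsI[OF HG m_closed[OF g sG]] cs by simp
  define r where "r = cof g"
  define r' where "r' = cof (g \<otimes> s)"
  have rr: "r = rep c" "r' = rep (c #> s)" using r_def r'_def c_def cs by (simp_all add: cof_def)
  have rG: "r \<in> carrier G" "r' \<in> carrier G" using cof_G g sG r_def r'_def by auto
  define m where "m = r \<otimes> s \<otimes> inv r'"
  have mG: "m \<in> carrier G" using rG sG by (simp add: m_def)
  have eq: "hpart (g \<otimes> s) = hpart g \<otimes> m"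
    using g sG rG by (simp add: m_def hpart_def r_def[symmetric] r'_def[symmetric] m_assoc cancel1)
  have a: "hpart g \<in> H" "hpart (g \<otimes> s) \<in> H" using hpart_H g sG by auto
  have "m = inv (hpart g) \<otimes> hpart (g \<otimes> s)" using eq cancel1 a HG mG by auto
  then have mH: "m \<in> H" using a subH by (simp add: subgroup.m_closed subgroup.m_inv_closed)
  have psi_eq: "\<psi> (hpart (g \<otimes> s)) = \<psi> (hpart g) + D c s"
    using eq psi_hom[OF a(1) mH] by (simp add: D_def m_def rr)
  have "\<bar>D c s\<bar> \<le> M" unfolding M_def
    using member_le_sum[of "(c, s)" "(rcosets H) \<times> S'" "\<lambda>p. \<bar>D (fst p) (snd p)\<bar>"] cR s finR finS' by auto
  then have k1: "K * \<bar>D c s\<bar> \<le> K * M" by (simp add: K_def)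
  have k2: "\<bar>int (idx (c #> s)) - int (idx c)\<bar> \<le> int k"
    using idx_lt[OF cR] idx_lt[OF csR] by linarith
  have "f (g \<otimes> s) - f g = K * D c s + (int (idx (c #> s)) - int (idx c))"
    unfolding f_def using psi_eq cs c_def by (simp add: algebra_simps)
  then have "\<bar>f (g \<otimes> s) - f g\<bar> \<le> \<bar>K\<bar> * \<bar>D c s\<bar> + int k"
    using k2 abs_triangle_ineq[of "K * D c s" "int (idx (c #> s)) - int (idx c)"] by (simp add: abs_mult)
  then show ?thesis using k1 unfolding K_def by linarith
qed

lemma path: "g \<in> carrier G \<Longrightarrow> set ws \<subseteq> S' \<Longrightarrow> \<bar>f (g \<otimes> wprod ws) - f g\<bar> \<le> (K * M + int k) * int (length ws)"
proof (induction ws arbitrary: g)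
  case Nil then show ?case by (simp add: wprod_def)
next
  case (Cons s ws)
  have sG: "s \<in> carrier G" using Cons S'G by auto
  have wG: "wprod ws \<in> carrier G" using Cons wprod_closed by auto
  have "g \<otimes> wprod (s # ws) = (g \<otimes> s) \<otimes> wprod ws"
    using Cons sG wG by (simp add: wprod_def m_assoc)
  moreover have "\<bar>f ((g \<otimes> s) \<otimes> wprod ws) - f (g \<otimes> s)\<bar> \<le> (K * M + int k) * int (length ws)"
    using Cons sG by auto
  moreover have "\<bar>f (g \<otimes> s) - f g\<bar> \<le> K * M + int k" using step Cons by auto
  ultimately show ?case by (simp add: algebra_simps)
qed

lemma upper: assumes "u \<in> carrier G" "v \<in> carrier G"
  shows "\<bar>f u - f v\<bar> \<le> (K * M + int k) * int (len (inv u \<otimes> v))"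
proof -
  obtain ws where ws: "length ws = len (inv u \<otimes> v)" "set ws \<subseteq> S'" "wprod ws = inv u \<otimes> v"
    using len_witness assms by blast
  have "u \<otimes> wprod ws = v" using ws assms cancel2 by simp
  then show ?thesis using path[OF assms(1) ws(2)] ws(1) by (simp add: abs_minus_commute)
qed

lemma arith1: "x \<noteq> 0 \<Longrightarrow> \<bar>y\<bar> \<le> int k \<Longrightarrow> \<bar>x\<bar> \<le> \<bar>(int k + 1) * x + (y::int)\<bar>"
proof -
  assume x: "x \<noteq> 0" and y: "\<bar>y\<bar> \<le> int k"
  have x1: "1 \<le> \<bar>x\<bar>" using x by arith
  have "int k * 1 \<le> int k * \<bar>x\<bar>" by (rule mult_left_mono) (use x1 in simp_all)
  moreover have "\<bar>(int k + 1) * x\<bar> = int k * \<bar>x\<bar> + \<bar>x\<bar>" by (subst abs_mult) (simp add: ring_distribs)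
  moreover have "\<bar>(int k + 1) * x\<bar> - \<bar>y\<bar> \<le> \<bar>(int k + 1) * x + y\<bar>"
    using abs_triangle_ineq[of "(int k + 1) * x + y" "-y"] by simp
  ultimately show ?thesis using y by linarith
qed

definition "tt = (SOME t. t \<in> H \<and> \<psi> t = 1)"
definition "Bt = len tt + len (inv tt)"
definition "A0 = (\<Sum>c\<in>rcosets H. len (rep c) + len (inv (rep c)))"
definition "L = 2 * int A0 + int Bt + 1"

lemma tt: "tt \<in> H" "\<psi> tt = 1"
  using someI_ex[of "\<lambda>t. t \<in> H \<and> \<psi> t = 1"] psi_surj[of 1] unfolding tt_def by auto

lemma lenH': "x \<in> H \<Longrightarrow> int (len x) \<le> int Bt * \<bar>\<psi> x\<bar>"
  using len_H[OF tt] unfolding Bt_def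
  by (metis (no_types, lifting) abs_ge_zero int_nat_eq nat_int of_nat_mono of_nat_mult)

lemma A0: "g \<in> carrier G \<Longrightarrow> len (cof g) + len (inv (cof g)) \<le> A0"
  unfolding A0_def cof_def
  using member_le_sum[of "H #> g" "rcosets H" "\<lambda>c. len (rep c) + len (inv (rep c))"] finR rcosetsI[OF HG]
  by auto

lemma lower: assumes u: "u \<in> carrier G" and v: "v \<in> carrier G"
  shows "int (len (inv u \<otimes> v)) \<le> L * \<bar>f u - f v\<bar>"
proof (cases "u = v")
  case True then show ?thesis using len_one u by simp
next
  case False
  define a where "a = hpart u"
  define b where "b = hpart v"
  define r where "r = cof u"
  define r' where "r' = cof v"
  have aH: "a \<in> H" "b \<in> H" using hpart_H u v a_def b_def by auto
  have aG: "a \<in> carrier G" "b \<in> carrier G" using aH HG by auto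
  have rG: "r \<in> carrier G" "r' \<in> carrier G" using cof_G u v r_def r'_def by auto
  have ue: "u = a \<otimes> r" "v = b \<otimes> r'" using hpart_eq u v a_def b_def r_def r'_def by auto
  have abH: "inv a \<otimes> b \<in> H" using aH subH by (simp add: subgroup.m_closed subgroup.m_inv_closed)
  have abG: "inv a \<otimes> b \<in> carrier G" using aG by simp
  have "inv u \<otimes> v = inv r \<otimes> ((inv a \<otimes> b) \<otimes> r')"
    using ue aG rG by (simp add: inv_mult_group m_assoc)
  then have "len (inv u \<otimes> v) \<le> len (inv r) + (len (inv a \<otimes> b) + len r')"
    using len_mult[of "inv r" "(inv a \<otimes> b) \<otimes> r'"] len_mult[OF abG rG(2)] rG abG by simp
  moreover have "len (inv r) \<le> A0" "len r' \<le> A0" using A0[OF u] A0[OF v] r_def r'_def by auto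
  moreover have "\<psi> (inv a \<otimes> b) = \<psi> b - \<psi> a"
    using psi_hom[of "inv a" b] psi_inv[of a] aH subH by (simp add: subgroup.m_inv_closed)
  ultimately have len_bd: "int (len (inv u \<otimes> v)) \<le> 2 * int A0 + int Bt * \<bar>\<psi> a - \<psi> b\<bar>"
    using lenH'[OF abH] by (simp add: abs_minus_commute)
  have cR: "H #> u \<in> rcosets H" "H #> v \<in> rcosets H" using rcosetsI[OF HG] u v by auto
  have iy: "\<bar>int (idx (H #> u)) - int (idx (H #> v))\<bar> \<le> int k"
    using idx_lt[OF cR(1)] idx_lt[OF cR(2)] by linarith
  have fd: "f u - f v = (int k + 1) * (\<psi> a - \<psi> b) + (int (idx (H #> u)) - int (idx (H #> v)))"
    unfolding f_def K_def a_def b_def by (simp add: algebra_simps)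
  have A0nn: "0 \<le> int A0" by simp
  show ?thesis
  proof (cases "\<psi> a = \<psi> b")
    case True
    then have "a = b" using inj_onD[OF psi_inj] aH by blast
    have "idx (H #> u) \<noteq> idx (H #> v)"
    proof
      assume "idx (H #> u) = idx (H #> v)"
      then have "H #> u = H #> v" using inj_onD[OF idx_inj] cR by blast
      then have "r = r'" using r_def r'_def cof_def by simp
      then show False using ue \<open>a = b\<close> False by simp
    qed
    then have "1 \<le> \<bar>f u - f v\<bar>" using fd True by simp
    then have "(2 * int A0 + int Bt + 1) * 1 \<le> (2 * int A0 + int Bt + 1) * \<bar>f u - f v\<bar>"
      by (intro mult_left_mono) simp_all
    then have "2 * int A0 \<le> L * \<bar>f u - f v\<bar>" unfolding L_def mult_1_right by linarith
    then show ?thesis using len_bd True by simp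
  next
    case False
    then have d1: "1 \<le> \<bar>\<psi> a - \<psi> b\<bar>" by simp
    have d2: "\<bar>\<psi> a - \<psi> b\<bar> \<le> \<bar>f u - f v\<bar>" using fd arith1[OF _ iy] False by simp
    have "2 * int A0 \<le> 2 * int A0 * \<bar>\<psi> a - \<psi> b\<bar>"
      using mult_left_mono[OF d1, of "2 * int A0"] by simp
    then have l1: "int (len (inv u \<otimes> v)) \<le> L * \<bar>\<psi> a - \<psi> b\<bar>"
      using len_bd unfolding L_def by (simp add: algebra_simps)
    have l2: "L * \<bar>\<psi> a - \<psi> b\<bar> \<le> L * \<bar>f u - f v\<bar>" using d2 unfolding L_def by (simp add: mult_left_mono)
    show ?thesis using order_trans[OF l1 l2] .
  qed
qed

lemma wd: "word_dist G S u v = len (inv u \<otimes> v)"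
  unfolding word_dist_def len_def wprod_def S'_def by simp

lemma bilip: "bilipschitz_embeddable_real (carrier G) (\<lambda>u v. real (word_dist G S u v))"
  unfolding bilipschitz_embeddable_real_def
proof (intro exI conjI ballI)
  have Lpos: "1 \<le> L" unfolding L_def by simp
  have Mnn: "0 \<le> M" unfolding M_def by (simp add: sum_nonneg)
  have Kp: "1 \<le> K" unfolding K_def by simp
  have hi1: "1 \<le> K * M + int k + 1" using Kp Mnn by (simp add: add_increasing)
  show "0 < 1 / real_of_int L" using Lpos by simp
  show "1 / real_of_int L \<le> real_of_int (K * M + int k + 1)"
  proof -
    have "1 / real_of_int L \<le> 1" using Lpos by simp
    also have "1 \<le> real_of_int (K * M + int k + 1)" using hi1 by linarith
    finally show ?thesis .
  qed
  fix u v assume u: "u \<in> carrier G" and v: "v \<in> carrier G"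
  have lo: "real (len (inv u \<otimes> v)) \<le> real_of_int L * \<bar>real_of_int (f u) - real_of_int (f v)\<bar>"
    using lower[OF u v] by (metis of_int_abs of_int_diff of_int_le_iff of_int_mult of_int_of_nat_eq)
  then show "1 / real_of_int L * real (word_dist G S u v) \<le> \<bar>real_of_int (f u) - real_of_int (f v)\<bar>"
    using Lpos by (simp add: wd field_simps)
  have up: "\<bar>f u - f v\<bar> \<le> (K * M + int k + 1) * int (len (inv u \<otimes> v))"
    using upper[OF u v] by (simp add: algebra_simps)
  then have "real_of_int \<bar>f u - f v\<bar> \<le> real_of_int ((K * M + int k + 1) * int (len (inv u \<otimes> v)))"
    by linarith
  then show "\<bar>real_of_int (f u) - real_of_int (f v)\<bar> \<le> real_of_int (K * M + int k + 1) * real (word_dist G S u v)"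
    by (simp add: wd)
qed
end

theorem propositionP:
  fixes G :: "('a, 'b) monoid_scheme"
  assumes "group G"
    and "finitely_generated G"
    and "\<exists>H. subgroup H G \<and> finite (rcosets\<^bsub>G\<^esub> H) \<and> G\<lparr>carrier := H\<rparr> \<cong> integer_group"
  shows "\<forall>S. finite S \<and> S \<subseteq> carrier G \<and> generate G S = carrier G \<longrightarrow>
           bilipschitz_embeddable_real (carrier G) (\<lambda>u v. real (word_dist G S u v))"
proof (intro allI impI)
  fix S assume S: "finite S \<and> S \<subseteq> carrier G \<and> generate G S = carrier G"
  obtain H where H: "subgroup H G" "finite (rcosets\<^bsub>G\<^esub> H)" "G\<lparr>carrier := H\<rparr> \<cong> integer_group"
    using assms(3) by blast
  obtain \<psi> where psi: "\<psi> \<in> iso (G\<lparr>carrier := H\<rparr>) integer_group" using H(3) unfolding is_iso_def by blast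
  obtain idx n where idx: "idx ` (rcosets\<^bsub>G\<^esub> H) = {i::nat. i < n}" "inj_on idx (rcosets\<^bsub>G\<^esub> H)"
    using finite_imp_inj_to_nat_seg[OF H(2)] by blast
  have "vz2 G H \<psi> S idx n"
    by (intro vz2.intro vz.intro vz_axioms.intro vz2_axioms.intro) (use assms(1) H psi S idx in auto)
  then interpret vz2 G H \<psi> S idx n .
  show "bilipschitz_embeddable_real (carrier G) (\<lambda>u v. real (word_dist G S u v))" by (rule bilip)
qed

end
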